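(* Let $\sigma,\lambda,\psi>0$, $0<\beta<1$, $\mu>0$. Consider the model $x_t=\hat E_t x_{t+1}-\sigma(i_t-\hat E_t\pi_{t+1})+\epsilon_t$, $\pi_t=\lambda x_t+\beta\hat E_t\pi_{t+1}$, $i_t=\max\{\psi\pi_t,-\mu\}$, where expectations are formed by the learning rule $\hat E_t Y_{t+j}=Y^e_t$ with $Y^e_t=Y^e_{t-1}+t^{-1}(Y_{t-1}-Y^e_{t-1})$, $Y_t=(x_t,\pi_t)'$ (so $Y^e_t$ is determined by data up to date $t-1$). Then the model is coherent and complete: at every date $t$, for every value of the predetermined forecast $Y^e_t\in\mathbb{R}^2$ and every value of the shock $\epsilon_t\in\mathbb{R}$, there exists exactly one $(x_t,\pi_t)\in\mathbb{R}^2$ solving the three equations.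
   Context: $x_t$ is the output gap, $\pi_t$ inflation, $i_t$ the nominal interest rate, $\epsilon_t$ an exogenous demand shock. Agents observe endogenous variables only with a one-period lag (lagged information), so the forecast $Y^e_t$ is taken as given when solving for date-$t$ outcomes. *)

theory Defs
  imports Complex_Main
begin

text \<open>Date-t equations of the model, given the predetermined forecast
  (xe, pie) = Y^e_t (used for both E_t x_{t+1} and E_t pi_{t+1}) and shock eps.\<close>
definition model_eqs ::
  "real \<Rightarrow> real \<Rightarrow> real \<Rightarrow> real \<Rightarrow> real \<Rightarrow> real \<Rightarrow> real \<Rightarrow> real \<Rightarrow> real \<Rightarrow> real \<Rightarrow> real \<Rightarrow> bool" where
  "model_eqs \<sigma> lam \<beta> \<psi> \<mu> xe pie eps x p i \<longleftrightarrow>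
     x = xe - \<sigma> * (i - pie) + eps \<and>
     p = lam * x + \<beta> * pie \<and>
     i = max (\<psi> * p) (- \<mu>)"

end

theory Submission
  imports Defs
begin

lemma uniq:
  fixes \<sigma> lam \<beta> \<psi> \<mu> :: real
  assumes "\<sigma> > 0" "lam > 0" "\<psi> > 0"
    and m1: "model_eqs \<sigma> lam \<beta> \<psi> \<mu> xe pie eps x1 p1 i1"
    and m2: "model_eqs \<sigma> lam \<beta> \<psi> \<mu> xe pie eps x2 p2 i2"
  shows "x1 = x2 \<and> p1 = p2"
proof -
  have a1a: "x1 = xe - \<sigma> * (i1 - pie) + eps"
    using m1[unfolded model_eqs_def] by (rule conjunct1)
  have a1b: "p1 = lam * x1 + \<beta> * pie"
    using m1[unfolded model_eqs_def] by (rule conjunct1[OF conjunct2])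
  note a1 = a1a a1b
  have a2a: "x2 = xe - \<sigma> * (i2 - pie) + eps"
    using m2[unfolded model_eqs_def] by (rule conjunct1)
  have a2b: "p2 = lam * x2 + \<beta> * pie"
    using m2[unfolded model_eqs_def] by (rule conjunct1[OF conjunct2])
  note a2 = a2a a2b
  have c1: "i1 = max (\<psi> * p1) (- \<mu>)"
    using m1[unfolded model_eqs_def] by (rule conjunct2[OF conjunct2])
  have c2: "i2 = max (\<psi> * p2) (- \<mu>)"
    using m2[unfolded model_eqs_def] by (rule conjunct2[OF conjunct2])
  have "p1 - p2 = lam * (x1 - x2)" using a1(2) a2(2) by (simp add: algebra_simps)
  also have "x1 - x2 = - \<sigma> * (i1 - i2)" using a1(1) a2(1) by (simp add: algebra_simps)
  finally have e1: "p1 - p2 = - lam * \<sigma> * (i1 - i2)" by simp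
  have mono: "(p1 - p2) * (i1 - i2) \<ge> 0"
  proof (cases "p1 \<le> p2")
    case True
    then have "\<psi> * p1 \<le> \<psi> * p2" using assms(3) by simp
    then have "i1 \<le> i2" unfolding c1 c2 by (rule max.mono) simp
    then show ?thesis using True by (simp add: mult_nonpos_nonpos)
  next
    case False
    then have "\<psi> * p2 \<le> \<psi> * p1" using assms(3) by simp
    then have "i2 \<le> i1" unfolding c1 c2 by (rule max.mono) simp
    then show ?thesis using False by simp
  qed
  have "(p1 - p2) * (i1 - i2) = - (lam * \<sigma>) * (i1 - i2)^2" unfolding e1 by (simp add: power2_eq_square)
  then have "- (lam * \<sigma>) * (i1 - i2)^2 \<ge> 0" using mono by linarith
  moreover have "lam * \<sigma> > 0" using assms by simp
  ultimately have "(lam * \<sigma>) * (i1 - i2)^2 \<le> 0" by (simp only: mult_minus_left neg_0_le_iff_le)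
  then have "(i1 - i2)^2 \<le> 0" using assms(1,2) by (simp add: mult_le_0_iff)
  then have "i1 = i2" by simp
  then have "x1 = x2" using a1a a2a by simp
  then show ?thesis using a1b a2b by simp
qed

theorem proposition2:
  fixes \<sigma> lam \<beta> \<psi> \<mu> :: real
  assumes "\<sigma> > 0" and "lam > 0" and "\<psi> > 0" and "0 < \<beta>" and "\<beta> < 1" and "\<mu> > 0"
  shows "\<forall>xe pie eps :: real.
           \<exists>!xp :: real \<times> real. \<exists>i. model_eqs \<sigma> lam \<beta> \<psi> \<mu> xe pie eps (fst xp) (snd xp) i"
proof (intro allI)
  fix xe pie eps :: real
  define A where "A = lam * (xe + \<sigma> * pie + eps) + \<beta> * pie"
  define d where "d = 1 + lam * \<sigma> * \<psi>"
  have dpos: "d > 0" unfolding d_def using assms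
    by (metis add_pos_pos mult_pos_pos zero_less_one)
  have ex: "\<exists>x p i. model_eqs \<sigma> lam \<beta> \<psi> \<mu> xe pie eps x p i"
  proof (cases "\<psi> * (A / d) \<ge> - \<mu>")
    case True
    define p where "p = A / d"
    define i where "i = \<psi> * p"
    define x where "x = xe - \<sigma> * (i - pie) + eps"
    have "p * d = A" unfolding p_def using dpos by simp
    then have "p = lam * x + \<beta> * pie" unfolding x_def i_def d_def A_def
      by (simp add: algebra_simps)
    moreover have "i = max (\<psi> * p) (- \<mu>)" using True unfolding i_def p_def by simp
    ultimately show ?thesis unfolding model_eqs_def x_def by blast
  next
    case False
    define p where "p = A + lam * \<sigma> * \<mu>"
    define i where "i = - \<mu>"
    define x where "x = xe - \<sigma> * (i - pie) + eps"
    have "p = lam * x + \<beta> * pie" unfolding x_def i_def p_def A_def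
      by (simp add: algebra_simps)
    moreover have "\<psi> * (A / d) * d < - \<mu> * d" using False dpos
      by (intro mult_strict_right_mono) auto
    then have "\<psi> * A < - \<mu> * d" using dpos by simp
    then have "\<psi> * p < - \<mu>" unfolding p_def d_def by (simp add: algebra_simps)
    then have "i = max (\<psi> * p) (- \<mu>)" unfolding i_def by simp
    ultimately show ?thesis unfolding model_eqs_def x_def by blast
  qed
  then obtain x p i where h: "model_eqs \<sigma> lam \<beta> \<psi> \<mu> xe pie eps x p i" by blast
  show "\<exists>!xp :: real \<times> real. \<exists>i. model_eqs \<sigma> lam \<beta> \<psi> \<mu> xe pie eps (fst xp) (snd xp) i"
  proof (rule ex1I[of _ "(x, p)"])
    show "\<exists>i. model_eqs \<sigma> lam \<beta> \<psi> \<mu> xe pie eps (fst (x, p)) (snd (x, p)) i" using h by auto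
  next
    fix xp :: "real \<times> real"
    assume "\<exists>i. model_eqs \<sigma> lam \<beta> \<psi> \<mu> xe pie eps (fst xp) (snd xp) i"
    then obtain j where "model_eqs \<sigma> lam \<beta> \<psi> \<mu> xe pie eps (fst xp) (snd xp) j" by blast
    from uniq[OF assms(1-3) this h] show "xp = (x, p)" by (cases xp) auto
  qed
qed

end
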